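(* Let $\mathbb{F}$ be a field, let $G\le\mathrm{GL}(n,\mathbb{F})$, and let $H$ be a normal subgroup of $G$ that is unipotent-by-abelian. If $x\in\mathrm{Rad}\langle H\rangle_{\mathbb{F}}$, then there is a non-zero $G$-submodule of $\mathbb{F}^n$ contained in the nullspace of $x$.
   Context: $G$ and $x$ act on $V=\mathbb{F}^n$ by matrix multiplication (on the same side), and the nullspace of $x$ is $\{v\in V: v$ is sent to $0$ by $x\}$. A group is unipotent-by-abelian if it has a unipotent normal subgroup with abelian quotient. $\langle H\rangle_{\mathbb{F}}$ is the $\mathbb{F}$-enveloping algebra of $H$ (the $\mathbb{F}$-subalgebra of $\mathrm{Mat}(n,\mathbb{F})$ generated by $H$), and $\mathrm{Rad}$ is its Jacobson radical. *)

theory Defs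
  imports "HOL-Analysis.Analysis"
begin

text \<open>Matrices over a field acting on column vectors by A *v v (G and x act on the same side).\<close>

definition matrix_group :: "('a::field^'n^'n) set \<Rightarrow> bool" where
  "matrix_group G \<longleftrightarrow> G \<subseteq> {A. invertible A} \<and> mat 1 \<in> G \<and>
     (\<forall>A\<in>G. \<forall>B\<in>G. A ** B \<in> G) \<and> (\<forall>A\<in>G. matrix_inv A \<in> G)"

definition normal_matrix_subgroup :: "('a::field^'n^'n) set \<Rightarrow> ('a^'n^'n) set \<Rightarrow> bool" where
  "normal_matrix_subgroup H G \<longleftrightarrow> matrix_group H \<and> H \<subseteq> G \<and>
     (\<forall>g\<in>G. \<forall>h\<in>H. g ** h ** matrix_inv g \<in> H)"

definition matpow :: "('a::field^'n^'n) \<Rightarrow> nat \<Rightarrow> 'a^'n^'n" where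
  "matpow A k = ((\<lambda>B. A ** B) ^^ k) (mat 1)"

definition unipotent_matrix :: "('a::field^'n^'n) \<Rightarrow> bool" where
  "unipotent_matrix A \<longleftrightarrow> (\<exists>k. matpow (A - mat 1) k = 0)"

definition unipotent_group :: "('a::field^'n^'n) set \<Rightarrow> bool" where
  "unipotent_group U \<longleftrightarrow> matrix_group U \<and> (\<forall>u\<in>U. unipotent_matrix u)"

text \<open>H/U abelian, with U normal in H, means every commutator of H lies in U.\<close>
definition unipotent_by_abelian :: "('a::field^'n^'n) set \<Rightarrow> bool" where
  "unipotent_by_abelian H \<longleftrightarrow> (\<exists>U. normal_matrix_subgroup U H \<and> unipotent_group U \<and>
     (\<forall>a\<in>H. \<forall>b\<in>H. a ** b ** matrix_inv a ** matrix_inv b \<in> U))"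

inductive_set enveloping_algebra :: "('a::field^'n^'n) set \<Rightarrow> ('a^'n^'n) set"
  for H where
  gen: "h \<in> H \<Longrightarrow> h \<in> enveloping_algebra H"
| one: "mat 1 \<in> enveloping_algebra H"
| add: "A \<in> enveloping_algebra H \<Longrightarrow> B \<in> enveloping_algebra H \<Longrightarrow> A + B \<in> enveloping_algebra H"
| smult: "A \<in> enveloping_algebra H \<Longrightarrow> (\<chi> i j. c * A $ i $ j) \<in> enveloping_algebra H"
| mult: "A \<in> enveloping_algebra H \<Longrightarrow> B \<in> enveloping_algebra H \<Longrightarrow> A ** B \<in> enveloping_algebra H"

definition left_ideal :: "('a::field^'n^'n) set \<Rightarrow> ('a^'n^'n) set \<Rightarrow> bool" where
  "left_ideal R L \<longleftrightarrow> L \<subseteq> R \<and> 0 \<in> L \<and> (\<forall>a\<in>L. \<forall>b\<in>L. a + b \<in> L) \<and> (\<forall>a\<in>L. - a \<in> L) \<and>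
     (\<forall>r\<in>R. \<forall>a\<in>L. r ** a \<in> L)"

definition maximal_left_ideal :: "('a::field^'n^'n) set \<Rightarrow> ('a^'n^'n) set \<Rightarrow> bool" where
  "maximal_left_ideal R L \<longleftrightarrow> left_ideal R L \<and> L \<noteq> R \<and>
     (\<forall>M. left_ideal R M \<and> L \<subseteq> M \<longrightarrow> M = L \<or> M = R)"

definition jacobson_radical :: "('a::field^'n^'n) set \<Rightarrow> ('a^'n^'n) set" where
  "jacobson_radical R = {x \<in> R. \<forall>L. maximal_left_ideal R L \<longrightarrow> x \<in> L}"

definition nullspace :: "('a::field^'n^'n) \<Rightarrow> ('a^'n) set" where
  "nullspace x = {v. x *v v = 0}"

definition G_submodule :: "('a::field^'n^'n) set \<Rightarrow> ('a^'n) set \<Rightarrow> bool" where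
  "G_submodule G W \<longleftrightarrow> 0 \<in> W \<and> (\<forall>v\<in>W. \<forall>w\<in>W. v + w \<in> W) \<and> (\<forall>c. \<forall>v\<in>W. c *s v \<in> W) \<and>
     (\<forall>g\<in>G. \<forall>w\<in>W. g *v w \<in> W)"

end

theory Submission
  imports Defs
begin

definition smat :: "'a::field \<Rightarrow> 'a^'n^'n \<Rightarrow> 'a^'n^'n" where
  "smat c A = (\<chi> i j. c * A $ i $ j)"

lemma EA_smat: "A \<in> enveloping_algebra H \<Longrightarrow> smat c A \<in> enveloping_algebra H"
  unfolding smat_def by (rule enveloping_algebra.smult)

lemma smat_mult_left: "smat c A ** B = smat c (A ** (B::'a::field^'n^'n))"
  by (simp add: smat_def matrix_matrix_mult_def vec_eq_iff sum_distrib_left mult_ac)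

lemma smat_mult_right: "A ** smat c B = smat c (A ** (B::'a::field^'n^'n))"
  by (simp add: smat_def matrix_matrix_mult_def vec_eq_iff sum_distrib_left mult_ac)

lemma smat_vec: "smat c A *v v = c *s (A *v (v::'a::field^'n))"
  by (simp add: smat_def matrix_vector_mult_def vec_eq_iff sum_distrib_left mult_ac)

lemma smat_one: "smat c (mat 1) ** A = smat c (A::'a::field^'n^'n)"
  by (simp add: smat_mult_left)

lemma smat_neg: "smat (-1) A = - (A::'a::field^'n^'n)"
  by (simp add: smat_def vec_eq_iff)

lemma smat_zero: "smat 0 A = (0::'a::field^'n^'n)"
  by (simp add: smat_def vec_eq_iff)

lemma matrix_add_rdistrib': "((B + C) ** A) = (B ** A) + (C ** (A::'a::field^'n^'n))"
  by (vector matrix_matrix_mult_def sum.distrib[symmetric] field_simps)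

lemma matrix_neg_left: "(- B) ** A = - (B ** (A::'a::field^'n^'n))"
  by (simp add: matrix_matrix_mult_def vec_eq_iff sum_negf)

lemma matrix_neg_right: "A ** (- B) = - (A ** (B::'a::field^'n^'n))"
  by (simp add: matrix_matrix_mult_def vec_eq_iff sum_negf)

lemma EA_zero: "0 \<in> enveloping_algebra (H::('a::field^'n^'n) set)"
  using EA_smat[OF enveloping_algebra.one, where c=0] by (simp add: smat_zero)

lemma EA_neg: "A \<in> enveloping_algebra H \<Longrightarrow> - A \<in> enveloping_algebra H"
  using EA_smat[of A H "-1"] by (simp add: smat_neg)

lemma invertible_inv:
  assumes "invertible (g::'a::field^'n^'n)"
  shows "g ** matrix_inv g = mat 1" "matrix_inv g ** g = mat 1"
proof -
  have "\<exists>A'. g ** A' = mat 1 \<and> A' ** g = mat 1" using assms unfolding invertible_def by blast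
  then have "g ** matrix_inv g = mat 1 \<and> matrix_inv g ** g = mat 1"
    unfolding matrix_inv_def by (rule someI_ex)
  then show "g ** matrix_inv g = mat 1" "matrix_inv g ** g = mat 1" by auto
qed

definition ring_aut :: "('a::field^'n^'n) set \<Rightarrow> ('a^'n^'n \<Rightarrow> 'a^'n^'n) \<Rightarrow> ('a^'n^'n \<Rightarrow> 'a^'n^'n) \<Rightarrow> bool" where
  "ring_aut R f fi \<longleftrightarrow> (\<forall>a. f (fi a) = a) \<and> (\<forall>a. fi (f a) = a) \<and>
     (\<forall>a b. f (a + b) = f a + f b) \<and> (\<forall>a. f (- a) = - f a) \<and> f 0 = 0 \<and>
     (\<forall>a b. f (a ** b) = f a ** f b) \<and>
     (\<forall>a b. fi (a + b) = fi a + fi b) \<and> (\<forall>a. fi (- a) = - fi a) \<and> fi 0 = 0 \<and>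
     (\<forall>a b. fi (a ** b) = fi a ** fi b) \<and> f ` R \<subseteq> R \<and> fi ` R \<subseteq> R"

lemma ring_aut_ffi: "ring_aut R f fi \<Longrightarrow> \<forall>a. f (fi a) = a"
  unfolding ring_aut_def by (elim conjE) assumption

lemma ring_aut_fif: "ring_aut R f fi \<Longrightarrow> \<forall>a. fi (f a) = a"
  unfolding ring_aut_def by (elim conjE) assumption

lemma ring_aut_fadd: "ring_aut R f fi \<Longrightarrow> \<forall>a b. f (a + b) = f a + f b"
  unfolding ring_aut_def by (elim conjE) assumption

lemma ring_aut_fneg: "ring_aut R f fi \<Longrightarrow> \<forall>a. f (- a) = - f a"
  unfolding ring_aut_def by (elim conjE) assumption

lemma ring_aut_fzero: "ring_aut R f fi \<Longrightarrow> f 0 = 0"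
  unfolding ring_aut_def by (elim conjE) assumption

lemma ring_aut_fmul: "ring_aut R f fi \<Longrightarrow> \<forall>a b. f (a ** b) = f a ** f b"
  unfolding ring_aut_def by (elim conjE) assumption

lemma ring_aut_fiadd: "ring_aut R f fi \<Longrightarrow> \<forall>a b. fi (a + b) = fi a + fi b"
  unfolding ring_aut_def by (elim conjE) assumption

lemma ring_aut_fineg: "ring_aut R f fi \<Longrightarrow> \<forall>a. fi (- a) = - fi a"
  unfolding ring_aut_def by (elim conjE) assumption

lemma ring_aut_fizero: "ring_aut R f fi \<Longrightarrow> fi 0 = 0"
  unfolding ring_aut_def by (elim conjE) assumption

lemma ring_aut_fimul: "ring_aut R f fi \<Longrightarrow> \<forall>a b. fi (a ** b) = fi a ** fi b"
  unfolding ring_aut_def by (elim conjE) assumption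

lemma ring_aut_fR: "ring_aut R f fi \<Longrightarrow> f ` R \<subseteq> R"
  unfolding ring_aut_def by (elim conjE) assumption

lemma ring_aut_fiR: "ring_aut R f fi \<Longrightarrow> fi ` R \<subseteq> R"
  unfolding ring_aut_def by (elim conjE) assumption

lemma ring_aut_sym: "ring_aut R f fi \<Longrightarrow> ring_aut R fi f"
  unfolding ring_aut_def by (elim conjE) (intro conjI; assumption)

lemma ring_aut_left_ideal:
  assumes "ring_aut R f fi" "left_ideal R L"
  shows "left_ideal R (f ` L)"
proof -
  note A = ring_aut_ffi[OF assms(1)] ring_aut_fadd[OF assms(1)] ring_aut_fneg[OF assms(1)]
    ring_aut_fzero[OF assms(1)] ring_aut_fmul[OF assms(1)] ring_aut_fR[OF assms(1)] ring_aut_fiR[OF assms(1)]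
  have L: "L \<subseteq> R" "0 \<in> L" "\<forall>a\<in>L. \<forall>b\<in>L. a + b \<in> L" "\<forall>a\<in>L. - a \<in> L" "\<forall>r\<in>R. \<forall>a\<in>L. r ** a \<in> L"
    using assms(2) unfolding left_ideal_def by auto
  show ?thesis unfolding left_ideal_def
  proof (intro conjI ballI)
    show "f ` L \<subseteq> R" using A L by blast
    have "f 0 \<in> f ` L" using L(2) by (rule imageI)
    then show "0 \<in> f ` L" using A(4) by simp
  next
    fix a b assume "a \<in> f ` L" "b \<in> f ` L"
    then obtain a' b' where "a' \<in> L" "b' \<in> L" "a = f a'" "b = f b'" by blast
    then have "a + b = f (a' + b')" "a' + b' \<in> L" using A L by auto
    then show "a + b \<in> f ` L" by (metis imageI)
  next
    fix a assume "a \<in> f ` L"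
    then obtain a' where "a' \<in> L" "a = f a'" by blast
    then have "- a = f (- a')" "- a' \<in> L" using A L by auto
    then show "- a \<in> f ` L" by (metis imageI)
  next
    fix r a assume "r \<in> R" "a \<in> f ` L"
    then obtain a' where a': "a' \<in> L" "a = f a'" by blast
    have "fi r \<in> R" using A \<open>r \<in> R\<close> by blast
    then have "fi r ** a' \<in> L" using L a' by blast
    moreover have "f (fi r ** a') = r ** a" using A a' by simp
    ultimately show "r ** a \<in> f ` L" by (metis imageI)
  qed
qed

lemma ring_aut_maximal:
  assumes "ring_aut R f fi" "maximal_left_ideal R L"
  shows "maximal_left_ideal R (f ` L)"
proof -
  note A1 = ring_aut_ffi[OF assms(1)] and A2 = ring_aut_fif[OF assms(1)]
   and A3 = ring_aut_fR[OF assms(1)] and A4 = ring_aut_fiR[OF assms(1)]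
  have L1: "left_ideal R L" and L2: "L \<noteq> R" and L3: "\<And>M. left_ideal R M \<Longrightarrow> L \<subseteq> M \<Longrightarrow> M = L \<or> M = R"
    using assms(2) unfolding maximal_left_ideal_def by blast+
  have fR: "f ` R = R"
  proof
    show "f ` R \<subseteq> R" by (rule A3)
    show "R \<subseteq> f ` R"
    proof
      fix a assume "a \<in> R" then have "fi a \<in> R" using A4 by blast
      then have "f (fi a) \<in> f ` R" by (rule imageI)
      then show "a \<in> f ` R" by (simp only: A1)
    qed
  qed
  have fiR: "fi ` R = R"
  proof
    show "fi ` R \<subseteq> R" by (rule A4)
    show "R \<subseteq> fi ` R"
    proof
      fix a assume "a \<in> R" then have "f a \<in> R" using A3 by blast
      then have "fi (f a) \<in> fi ` R" by (rule imageI)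
      then show "a \<in> fi ` R" by (simp only: A2)
    qed
  qed
  have fifL: "fi ` f ` L = L" by (simp only: image_image A2 image_ident)
  have ffiM: "\<And>M. f ` fi ` M = M" by (simp only: image_image A1 image_ident)
  show ?thesis unfolding maximal_left_ideal_def
  proof (intro conjI allI impI)
    show "left_ideal R (f ` L)" using ring_aut_left_ideal[OF assms(1) L1] .
    show "f ` L \<noteq> R"
    proof
      assume "f ` L = R"
      then have "fi ` f ` L = fi ` R" by (rule arg_cong)
      then have "L = R" by (simp only: fifL fiR)
      then show False using L2 by contradiction
    qed
  next
    fix M assume M: "left_ideal R M \<and> f ` L \<subseteq> M"
    have "left_ideal R (fi ` M)" using ring_aut_left_ideal[OF ring_aut_sym[OF assms(1)]] M by blast
    moreover have "L \<subseteq> fi ` M" using M image_mono[of "f ` L" M fi] by (simp only: fifL)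
    ultimately have "fi ` M = L \<or> fi ` M = R" by (rule L3)
    then have "f ` fi ` M = f ` L \<or> f ` fi ` M = f ` R" by blast
    then show "M = f ` L \<or> M = R" by (simp only: ffiM fR)
  qed
qed

lemma ring_aut_jacobson:
  assumes "ring_aut R f fi" "a \<in> jacobson_radical R"
  shows "fi a \<in> jacobson_radical R"
proof -
  note A = ring_aut_fif[OF assms(1)] ring_aut_fiR[OF assms(1)]
  have aR: "a \<in> R" and aL: "\<And>L. maximal_left_ideal R L \<Longrightarrow> a \<in> L"
    using assms(2) unfolding jacobson_radical_def by auto
  show ?thesis unfolding jacobson_radical_def
  proof (intro CollectI conjI allI impI)
    show "fi a \<in> R" using A aR by blast
    fix L assume "maximal_left_ideal R L"
    then have "a \<in> f ` L" using aL ring_aut_maximal[OF assms(1)] by blast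
    then obtain l where "l \<in> L" "a = f l" by blast
    then show "fi a \<in> L" using A by simp
  qed
qed

lemma conj_EA:
  assumes G: "matrix_group G" and N: "normal_matrix_subgroup H G" and g: "g \<in> G"
    and a: "a \<in> enveloping_algebra H"
  shows "g ** a ** matrix_inv g \<in> enveloping_algebra H"
  using a
proof (induction rule: enveloping_algebra.induct)
  have inv: "invertible g" using G g unfolding matrix_group_def by blast
  note gi = invertible_inv[OF inv]
  {
    case (gen h)
    then show ?case using N g unfolding normal_matrix_subgroup_def
      by (blast intro: enveloping_algebra.gen)
  next
    case one
    then show ?case using gi by (simp add: enveloping_algebra.one)
  next
    case (add A B)
    have "g ** (A + B) ** matrix_inv g = g ** A ** matrix_inv g + g ** B ** matrix_inv g"
      by (simp add: matrix_add_ldistrib matrix_add_rdistrib')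
    then show ?case using add by (simp add: enveloping_algebra.add)
  next
    case (smult A c)
    have "g ** (\<chi> i j. c * A $ i $ j) ** matrix_inv g = smat c (g ** A ** matrix_inv g)"
      unfolding smat_def[symmetric] by (simp add: smat_mult_left smat_mult_right)
    then show ?case using smult by (simp add: EA_smat)
  next
    case (mult A B)
    have "g ** (A ** B) ** matrix_inv g = (g ** A ** matrix_inv g) ** (g ** B ** matrix_inv g)"
    proof -
      have "(g ** A ** matrix_inv g) ** (g ** B ** matrix_inv g)
          = g ** A ** (matrix_inv g ** g) ** B ** matrix_inv g"
        by (simp add: matrix_mul_assoc)
      also have "\<dots> = g ** (A ** B) ** matrix_inv g" using gi by (simp add: matrix_mul_assoc)
      finally show ?thesis by simp
    qed
    then show ?case using mult by (simp add: enveloping_algebra.mult)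
  }
qed

lemma conj_ring_aut:
  assumes G: "matrix_group G" and N: "normal_matrix_subgroup H G" and g: "g \<in> G"
  shows "ring_aut (enveloping_algebra H) (\<lambda>a. g ** a ** matrix_inv g)
           (\<lambda>a. matrix_inv g ** a ** matrix_inv (matrix_inv g))"
proof -
  let ?gi = "matrix_inv g"
  have inv: "invertible g" using G g unfolding matrix_group_def by blast
  note gi = invertible_inv[OF inv]
  have giG: "?gi \<in> G" using G g unfolding matrix_group_def by blast
  have inv2: "invertible ?gi" using G giG unfolding matrix_group_def by blast
  note gii = invertible_inv[OF inv2]
  have c1: "g ** (?gi ** a ** matrix_inv ?gi) ** ?gi = a" for a
  proof -
    have "g ** (?gi ** a ** matrix_inv ?gi) ** ?gi = (g ** ?gi) ** a ** (matrix_inv ?gi ** ?gi)"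
      by (simp add: matrix_mul_assoc)
    then show ?thesis using gi gii by simp
  qed
  have c2: "?gi ** (g ** a ** ?gi) ** matrix_inv ?gi = a" for a
  proof -
    have "?gi ** (g ** a ** ?gi) ** matrix_inv ?gi = (?gi ** g) ** a ** (?gi ** matrix_inv ?gi)"
      by (simp add: matrix_mul_assoc)
    then show ?thesis using gi gii by simp
  qed
  have m1: "g ** (a ** b) ** ?gi = (g ** a ** ?gi) ** (g ** b ** ?gi)" for a b
  proof -
    have "(g ** a ** ?gi) ** (g ** b ** ?gi) = g ** a ** (?gi ** g) ** b ** ?gi"
      by (simp add: matrix_mul_assoc)
    then show ?thesis using gi by (simp add: matrix_mul_assoc)
  qed
  have m2: "?gi ** (a ** b) ** matrix_inv ?gi = (?gi ** a ** matrix_inv ?gi) ** (?gi ** b ** matrix_inv ?gi)" for a b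
  proof -
    have "(?gi ** a ** matrix_inv ?gi) ** (?gi ** b ** matrix_inv ?gi) = ?gi ** a ** (matrix_inv ?gi ** ?gi) ** b ** matrix_inv ?gi"
      by (simp add: matrix_mul_assoc)
    then show ?thesis using gii by (simp add: matrix_mul_assoc)
  qed
  show ?thesis unfolding ring_aut_def
  proof (intro conjI allI)
    show "(\<lambda>a. g ** a ** matrix_inv g) ` enveloping_algebra H \<subseteq> enveloping_algebra H"
      using conj_EA[OF G N g] by blast
    show "(\<lambda>a. ?gi ** a ** matrix_inv ?gi) ` enveloping_algebra H \<subseteq> enveloping_algebra H"
      using conj_EA[OF G N giG] by blast
  qed (rule c1 | rule c2 | simp only: m1 m2 matrix_add_ldistrib matrix_add_rdistrib' matrix_neg_left matrix_neg_right times0_left times0_right)+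
qed


definition invsub :: "('a::field^'n^'n) set \<Rightarrow> ('a^'n) set \<Rightarrow> bool" where
  "invsub R T \<longleftrightarrow> vec.subspace T \<and> (\<forall>a\<in>R. \<forall>t\<in>T. a *v t \<in> T)"

lemma UNIV_ne_zero: "(UNIV :: ('a::field^'n) set) \<noteq> {0}"
proof
  assume "(UNIV :: ('a::field^'n) set) = {0}"
  then have "(\<chi> i. 1 :: 'a^'n) = 0" by blast
  then show False by (simp add: vec_eq_iff)
qed

lemma simple_exists:
  "\<exists>S. invsub R (S::('a::field^'n) set) \<and> S \<noteq> {0} \<and>
     (\<forall>T. invsub R T \<and> T \<noteq> {0} \<and> T \<subseteq> S \<longrightarrow> T = S)"
proof -
  let ?P = "\<lambda>T::('a^'n) set. invsub R T \<and> T \<noteq> {0}"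
  have "?P UNIV" using UNIV_ne_zero unfolding invsub_def by simp
  then obtain S where S: "?P S" and min: "\<And>T. ?P T \<Longrightarrow> vec.dim S \<le> vec.dim T"
    using ex_has_least_nat[of ?P UNIV vec.dim] by blast
  show ?thesis
  proof (intro exI conjI allI impI)
    show "invsub R S" "S \<noteq> {0}" using S by auto
    fix T assume T: "invsub R T \<and> T \<noteq> {0} \<and> T \<subseteq> S"
    show "T = S"
    proof (rule vec.subspace_dim_equal)
      show "vec.subspace T" "vec.subspace S" using T S unfolding invsub_def by auto
      show "T \<subseteq> S" using T by auto
      show "vec.dim S \<le> vec.dim T" using T min by auto
    qed
  qed
qed

lemma annihilator_maximal:
  fixes S :: "('a::field^'n) set"
  assumes Sinv: "invsub (enveloping_algebra H) S"
    and Smin: "\<forall>T. invsub (enveloping_algebra H) T \<and> T \<noteq> {0} \<and> T \<subseteq> S \<longrightarrow> T = S"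
    and s: "s \<in> S" "s \<noteq> 0"
  shows "maximal_left_ideal (enveloping_algebra H) {a \<in> enveloping_algebra H. a *v s = 0}"
proof -
  let ?A = "enveloping_algebra H"
  let ?L = "{a \<in> ?A. a *v s = 0}"
  have Linv: "left_ideal ?A ?L" unfolding left_ideal_def
  proof (intro conjI ballI)
    show "?L \<subseteq> ?A" by blast
    show "0 \<in> ?L" using EA_zero by simp
  next
    fix a b assume "a \<in> ?L" "b \<in> ?L"
    then show "a + b \<in> ?L" by (simp add: enveloping_algebra.add matrix_vector_mult_add_rdistrib)
  next
    fix a assume "a \<in> ?L"
    then show "- a \<in> ?L" by (simp add: EA_neg matrix_vector_mult_diff_rdistrib[of 0 a, simplified])
  next
    fix r a assume "r \<in> ?A" "a \<in> ?L"
    then show "r ** a \<in> ?L"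
      by (simp add: enveloping_algebra.mult matrix_vector_mul_assoc[symmetric])
  qed
  show ?thesis unfolding maximal_left_ideal_def
  proof (intro conjI allI impI)
    show "left_ideal ?A ?L" by (rule Linv)
    show "?L \<noteq> ?A"
    proof
      assume "?L = ?A"
      then have "mat 1 \<in> ?L" using enveloping_algebra.one by blast
      then show False using s by simp
    qed
  next
    fix M assume M: "left_ideal ?A M \<and> ?L \<subseteq> M"
    have MA: "M \<subseteq> ?A" and M0: "0 \<in> M" and Madd: "\<And>a b. a \<in> M \<Longrightarrow> b \<in> M \<Longrightarrow> a + b \<in> M"
      and Mmul: "\<And>r a. r \<in> ?A \<Longrightarrow> a \<in> M \<Longrightarrow> r ** a \<in> M"
      using M unfolding left_ideal_def by auto
    let ?T = "(\<lambda>m. m *v s) ` M"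
    have Tinv: "invsub ?A ?T" unfolding invsub_def vec.subspace_def
    proof (intro conjI ballI allI)
      show "0 \<in> ?T" using M0 by (metis image_eqI matrix_vector_mult_0)
    next
      fix x y assume "x \<in> ?T" "y \<in> ?T"
      then obtain a b where ab: "a \<in> M" "b \<in> M" "x = a *v s" "y = b *v s" by blast
      then have "x + y = (a + b) *v s" by (simp add: matrix_vector_mult_add_rdistrib)
      then show "x + y \<in> ?T" using Madd[OF ab(1,2)] by blast
    next
      fix c x assume "x \<in> ?T"
      then obtain a where a: "a \<in> M" "x = a *v s" by blast
      have "smat c (mat 1) ** a \<in> M" using Mmul[OF EA_smat[OF enveloping_algebra.one] a(1)] .
      then have "smat c a \<in> M" by (simp add: smat_one)
      moreover have "c *s x = smat c a *v s" using a by (simp add: smat_vec)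
      ultimately show "c *s x \<in> ?T" by blast
    next
      fix r x assume "r \<in> ?A" "x \<in> ?T"
      then obtain a where a: "a \<in> M" "x = a *v s" by blast
      have "r *v x = (r ** a) *v s" using a by (simp add: matrix_vector_mul_assoc)
      then show "r *v x \<in> ?T" using Mmul[OF \<open>r \<in> ?A\<close> a(1)] by blast
    qed
    have TS: "?T \<subseteq> S"
    proof
      fix x assume "x \<in> ?T"
      then obtain a where a: "a \<in> M" "x = a *v s" by blast
      then show "x \<in> S" using Sinv MA s(1) unfolding invsub_def by blast
    qed
    show "M = ?L \<or> M = ?A"
    proof (cases "?T = {0}")
      case True
      then have "M \<subseteq> ?L" using MA by blast
      then show ?thesis using M by blast
    next
      case False
      then have "?T = S" using Smin Tinv TS by blast
      then obtain m where m: "m \<in> M" "s = m *v s" using s(1) by force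
      have mA: "m \<in> ?A" using m MA by blast
      have "mat 1 + - m \<in> ?A" using mA by (intro enveloping_algebra.add enveloping_algebra.one EA_neg)
      moreover have "(mat 1 + - m) *v s = 0"
        using m(2) by (simp add: matrix_vector_mult_diff_rdistrib)
      ultimately have "mat 1 + - m \<in> M" using M by blast
      then have one: "mat 1 \<in> M" using Madd[OF _ m(1)] by fastforce
      have "?A \<subseteq> M"
      proof
        fix r assume "r \<in> ?A"
        then show "r \<in> M" using Mmul[OF _ one] by fastforce
      qed
      then show ?thesis using MA by blast
    qed
  qed
qed

theorem lemma3p2:
  fixes G H :: "('a::field^'n^'n) set" and x :: "'a^'n^'n"
  assumes "matrix_group G"
    and "normal_matrix_subgroup H G"
    and "unipotent_by_abelian H"
    and "x \<in> jacobson_radical (enveloping_algebra H)"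
  shows "\<exists>W. G_submodule G W \<and> W \<noteq> {0} \<and> W \<subseteq> nullspace x"
proof -
  let ?A = "enveloping_algebra H"
  let ?J = "jacobson_radical ?A"
  define W where "W = {v. \<forall>a\<in>?J. a *v v = 0}"
  obtain S where S: "invsub ?A S" "S \<noteq> {0}"
    and Smin: "\<forall>T. invsub ?A T \<and> T \<noteq> {0} \<and> T \<subseteq> S \<longrightarrow> T = S"
    using simple_exists[of ?A] by blast
  have SW: "S \<subseteq> W"
  proof
    fix s assume s: "s \<in> S"
    show "s \<in> W"
    proof (cases "s = 0")
      case True then show ?thesis unfolding W_def by simp
    next
      case False
      have "maximal_left_ideal ?A {a \<in> ?A. a *v s = 0}"
        using annihilator_maximal[OF S(1) Smin s False] .
      then show ?thesis unfolding W_def jacobson_radical_def by blast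
    qed
  qed
  have "0 \<in> S" using S(1) unfolding invsub_def by (simp add: vec.subspace_0)
  then obtain s where "s \<in> S" "s \<noteq> 0" using S(2) by blast
  then have Wne: "W \<noteq> {0}" using SW by blast
  have Wnull: "W \<subseteq> nullspace x" using assms(4) unfolding W_def nullspace_def by blast
  have Wsub: "G_submodule G W" unfolding G_submodule_def
  proof (intro conjI ballI allI)
    show "0 \<in> W" unfolding W_def by simp
  next
    fix v w assume "v \<in> W" "w \<in> W"
    then show "v + w \<in> W" unfolding W_def by (simp add: matrix_vector_right_distrib)
  next
    fix c v assume "v \<in> W"
    then show "c *s v \<in> W" unfolding W_def by (simp add: vector_scalar_commute)
  next
    fix g w assume g: "g \<in> G" and w: "w \<in> W"
    have inv: "invertible g" using assms(1) g unfolding matrix_group_def by blast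
    note gi = invertible_inv[OF inv]
    note RA = conj_ring_aut[OF assms(1) assms(2) g]
    show "g *v w \<in> W" unfolding W_def
    proof (intro CollectI ballI)
      fix a assume a: "a \<in> ?J"
      define b where "b = matrix_inv g ** a ** matrix_inv (matrix_inv g)"
      have bJ: "b \<in> ?J" unfolding b_def using ring_aut_jacobson[OF RA a] by simp
      have ab: "a = g ** b ** matrix_inv g" unfolding b_def using ring_aut_ffi[OF RA] by simp
      have "a *v (g *v w) = g *v (b *v w)"
      proof -
        have "a *v (g *v w) = (g ** b ** (matrix_inv g ** g)) *v w"
          by (simp add: ab matrix_vector_mul_assoc matrix_mul_assoc)
        also have "\<dots> = g *v (b *v w)" using gi by (simp add: matrix_vector_mul_assoc)
        finally show ?thesis .
      qed
      also have "b *v w = 0" using w bJ unfolding W_def by blast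
      finally show "a *v (g *v w) = 0" by simp
    qed
  qed
  show ?thesis using Wsub Wne Wnull by blast
qed

end
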